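(* Let $\Lambda\subset[0,+\infty)$ be a decreasing gap asymptotically dense set and let $f:\mathbb{R}\to[0,+\infty)$ be continuous. If $x$ is an interior point of $C(f,\Lambda)$, then \[ \mu\big([x,+\infty)\cap D(f,\Lambda)\big)=0 . \]
   Context: $\mu$ denotes one-dimensional Lebesgue measure. For a discrete set $\Lambda\subset[0,\infty)$ and $f:\mathbb{R}\to[0,+\infty)$, put $s(x)=\sum_{\lambda\in\Lambda}f(x+\lambda)$, $C(f,\Lambda)=\{x: s(x)<\infty\}$ and $D(f,\Lambda)=\{x: s(x)=\infty\}$. An unbounded infinite discrete set $\Lambda=\{\lambda_1<\lambda_2<\cdots\}$ is a decreasing gap asymptotically dense set if the gaps $d_n=\lambda_n-\lambda_{n-1}$ tend to $0$ monotone decreasingly. *)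

theory Defs
  imports "HOL-Analysis.Analysis"
begin

definition dgad_set :: "real set \<Rightarrow> bool" where
  "dgad_set \<Lambda> \<longleftrightarrow> (\<exists>lam :: nat \<Rightarrow> real.
      strict_mono lam \<and> \<Lambda> = range lam \<and> (\<forall>n. 0 \<le> lam n) \<and> \<not> bdd_above \<Lambda> \<and>
      decseq (\<lambda>n. lam (Suc n) - lam n) \<and> (\<lambda>n. lam (Suc n) - lam n) \<longlonglongrightarrow> 0)"

definition ssum :: "(real \<Rightarrow> real) \<Rightarrow> real set \<Rightarrow> real \<Rightarrow> ennreal" where
  "ssum f \<Lambda> x = (\<Sum>\<^sub>\<infinity>l\<in>\<Lambda>. ennreal (f (x + l)))"

definition Cset :: "(real \<Rightarrow> real) \<Rightarrow> real set \<Rightarrow> real set" where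
  "Cset f \<Lambda> = {x. ssum f \<Lambda> x < \<infinity>}"

definition Dset :: "(real \<Rightarrow> real) \<Rightarrow> real set \<Rightarrow> real set" where
  "Dset f \<Lambda> = {x. ssum f \<Lambda> x = \<infinity>}"

end

theory Submission
  imports Defs
begin


lemma ssum_eq:
  assumes "strict_mono lam" "\<Lambda> = range lam"
  shows "ssum f \<Lambda> t = (\<Sum>n. ennreal (f (t + lam n)))"
proof -
  have inj: "inj_on lam UNIV" using assms(1) strict_mono_imp_inj_on by blast
  have "ssum f \<Lambda> t = infsum ((\<lambda>l. ennreal (f (t + l))) \<circ> lam) UNIV"
    unfolding ssum_def assms(2) by (rule infsum_reindex[OF inj])
  also have "\<dots> = (\<Sum>n. ennreal (f (t + lam n)))"
  proof -
    have "((\<lambda>l. ennreal (f (t + l))) \<circ> lam) summable_on UNIV"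
      by (rule nonneg_summable_on_complete) auto
    then have "(((\<lambda>l. ennreal (f (t + l))) \<circ> lam) has_sum infsum ((\<lambda>l. ennreal (f (t + l))) \<circ> lam) UNIV) UNIV"
      by (rule has_sum_infsum)
    then have "((\<lambda>l. ennreal (f (t + l))) \<circ> lam) sums infsum ((\<lambda>l. ennreal (f (t + l))) \<circ> lam) UNIV"
      by (rule has_sum_imp_sums)
    then show ?thesis by (simp add: sums_unique o_def)
  qed
  finally show ?thesis .
qed

lemma suminf_le_ennreal_iff:
  fixes g :: "nat \<Rightarrow> real"
  assumes "\<And>n. 0 \<le> g n" "0 \<le> K"
  shows "(\<Sum>n. ennreal (g n)) \<le> ennreal K \<longleftrightarrow> (\<forall>N. (\<Sum>n<N. g n) \<le> K)"
proof -
  have "(\<Sum>n. ennreal (g n)) = (SUP N. \<Sum>n<N. ennreal (g n))"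
    by (rule suminf_eq_SUP)
  also have "\<dots> = (SUP N. ennreal (\<Sum>n<N. g n))"
    using assms(1) by (simp add: sum_ennreal)
  finally show ?thesis
    using assms by (simp add: SUP_le_iff ennreal_le_iff sum_nonneg)
qed

lemma closed_le:
  fixes f :: "real \<Rightarrow> real" and lam :: "nat \<Rightarrow> real"
  assumes "continuous_on UNIV f" "\<And>t. 0 \<le> f t" "0 \<le> K"
  shows "closed {t. (\<Sum>n. ennreal (f (t + lam n))) \<le> ennreal K}"
proof -
  have c1: "continuous_on UNIV (\<lambda>t. f (t + c))" for c
  proof -
    have "continuous_on UNIV (\<lambda>t::real. t + c)" by (intro continuous_intros)
    then show ?thesis using continuous_on_compose2[OF assms(1), of UNIV "\<lambda>t. t + c"] by auto
  qed
  have "{t. (\<Sum>n. ennreal (f (t + lam n))) \<le> ennreal K} = (\<Inter>N. {t. (\<Sum>n<N. f (t + lam n)) \<le> K})"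
    using suminf_le_ennreal_iff[OF _ assms(3)] assms(2) by auto
  moreover have "closed {t. (\<Sum>n<N. f (t + lam n)) \<le> K}" for N
    by (intro closed_Collect_le continuous_on_sum c1 continuous_on_const)
  ultimately show ?thesis by auto
qed



lemma baire_interval:
  fixes F :: "nat \<Rightarrow> real set"
  assumes cl: "\<And>K. closed (F K)" and cov: "{c..d} \<subseteq> (\<Union>K. F K)" and cd: "c < d"
  shows "\<exists>K a b. a < b \<and> {a..b} \<subseteq> F K \<and> {a..b} \<subseteq> {c..d}"
proof -
  let ?X = "top_of_set {c..d}"
  let ?G = "range (\<lambda>K. {c..d} \<inter> F K)"
  have cm: "completely_metrizable_space ?X"
    using completely_metrizable_space_cbox[of c d] by simp
  have U: "\<Union>?G = {c..d}" using cov by auto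
  have "\<exists>T\<in>?G. ?X interior_of T \<noteq> {}"
  proof (rule ccontr)
    assume "\<not> ?thesis"
    then have "?X interior_of \<Union>?G = {}"
      by (intro Baire_category_alt) (auto intro!: closedin_closed_Int cl simp: cm)
    moreover have "?X interior_of {c..d} = {c..d}" using interior_of_topspace[of ?X] by simp
    ultimately show False using U cd by auto
  qed
  then obtain K z where z: "z \<in> ?X interior_of ({c..d} \<inter> F K)" by blast
  then obtain U where U: "openin ?X U" "z \<in> U" "U \<subseteq> {c..d} \<inter> F K"
    unfolding interior_of_def by blast
  then obtain V where V: "open V" "U = {c..d} \<inter> V" by (auto simp: openin_open)
  then obtain e where e: "e > 0" "ball z e \<subseteq> V" using U(2) open_contains_ball by blast
  have zc: "z \<in> {c..d}" using U by auto
  define a where "a = max c (z - e/2)"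
  define b where "b = min d (z + e/2)"
  have "a < b" using zc e cd unfolding a_def b_def by auto
  moreover have "{a..b} \<subseteq> {c..d} \<inter> ball z e"
    using e unfolding a_def b_def by (auto simp: dist_real_def)
  ultimately show ?thesis using U V e by blast
qed



definition V :: "(real \<Rightarrow> real) \<Rightarrow> real \<Rightarrow> real \<Rightarrow> ennreal" where
  "V f p q = (\<integral>\<^sup>+u. indicator {p..q} u * ennreal (f u) \<partial>lborel)"

lemma f_meas: "continuous_on UNIV f \<Longrightarrow> f \<in> borel_measurable borel"
  by (simp add: borel_measurable_continuous_onI)

lemma V_finite:
  assumes "continuous_on UNIV f"
  shows "V f p q < \<infinity>"
proof -
  have "compact (f ` {p..q})"
    by (rule compact_continuous_image) (auto intro: continuous_on_subset[OF assms])
  then obtain M where M: "\<And>u. u \<in> {p..q} \<Longrightarrow> \<bar>f u\<bar> \<le> M"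
    using compact_imp_bounded bounded_real by (metis image_eqI)
  have M': "\<And>u. u \<in> {p..q} \<Longrightarrow> f u \<le> M" using M abs_le_D1 by blast
  have "V f p q \<le> (\<integral>\<^sup>+u. ennreal M * indicator {p..q} u \<partial>lborel)"
    unfolding V_def
    by (intro nn_integral_mono) (auto simp: indicator_def intro!: ennreal_leI M')
  also have "\<dots> = ennreal M * emeasure lborel {p..q}"
    by (simp add: nn_integral_cmult_indicator)
  also have "\<dots> < \<infinity>" by (cases "p \<le> q") (auto simp: ennreal_mult_less_top top_unique)
  finally show ?thesis .
qed

lemma V_mono:
  assumes "{p..q} \<subseteq> {p'..q'}" "\<And>t. 0 \<le> f t"
  shows "V f p q \<le> V f p' q'"
  unfolding V_def using assms
  by (intro nn_integral_mono) (auto simp: indicator_def)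

lemma V_split:
  assumes "\<alpha> \<le> \<beta>" "\<beta> \<le> \<alpha> + L" "\<And>t. 0 \<le> f t" "continuous_on UNIV f"
  shows "V f \<alpha> (\<beta> + L) \<le> V f \<alpha> (\<alpha> + L) + V f \<beta> (\<beta> + L)"
proof -
  have [measurable]: "f \<in> borel_measurable borel" using f_meas[OF assms(4)] .
  have "V f \<alpha> (\<beta> + L) \<le> (\<integral>\<^sup>+u. indicator {\<alpha>..\<alpha>+L} u * ennreal (f u) + indicator {\<beta>..\<beta>+L} u * ennreal (f u) \<partial>lborel)"
    unfolding V_def using assms
    by (intro nn_integral_mono) (auto simp: indicator_def)
  also have "\<dots> = V f \<alpha> (\<alpha> + L) + V f \<beta> (\<beta> + L)"
    unfolding V_def by (rule nn_integral_add) auto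
  finally show ?thesis .
qed

lemma V_shift:
  assumes "continuous_on UNIV f"
  shows "(\<integral>\<^sup>+t. indicator {c..c+L} t * ennreal (f (t + l)) \<partial>lborel) = V f (c+l) (c+l+L)"
proof -
  have [measurable]: "f \<in> borel_measurable borel" using f_meas[OF assms] .
  have "V f (c+l) (c+l+L) = (\<integral>\<^sup>+x. indicator {c+l..c+l+L} (l + 1 * x) * ennreal (f (l + 1 * x)) \<partial>lborel)"
    unfolding V_def using nn_integral_real_affine[of "\<lambda>u. indicator {c+l..c+l+L} u * ennreal (f u)" 1 l] by simp
  also have "\<dots> = (\<integral>\<^sup>+t. indicator {c..c+L} t * ennreal (f (t + l)) \<partial>lborel)"
    by (intro nn_integral_cong) (auto simp: indicator_def add.commute)
  finally show ?thesis by simp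
qed

lemma F_eq:
  assumes "continuous_on UNIV f"
  shows "(\<integral>\<^sup>+t. indicator {c..c+L} t * (\<Sum>n. ennreal (f (t + lam n))) \<partial>lborel)
       = (\<Sum>n. V f (c + lam n) (c + lam n + L))"
proof -
  have [measurable]: "f \<in> borel_measurable borel" using f_meas[OF assms] .
  have "(\<integral>\<^sup>+t. indicator {c..c+L} t * (\<Sum>n. ennreal (f (t + lam n))) \<partial>lborel)
     = (\<integral>\<^sup>+t. (\<Sum>n. indicator {c..c+L} t * ennreal (f (t + lam n))) \<partial>lborel)"
    by simp
  also have "\<dots> = (\<Sum>n. \<integral>\<^sup>+t. indicator {c..c+L} t * ennreal (f (t + lam n)) \<partial>lborel)"
    by (rule nn_integral_suminf) auto
  also have "\<dots> = (\<Sum>n. V f (c + lam n) (c + lam n + L))"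
    using V_shift[OF assms] by simp
  finally show ?thesis .
qed



lemma suminf_strict_mono_le:
  fixes G :: "nat \<Rightarrow> ennreal"
  assumes "strict_mono \<mu>"
  shows "(\<Sum>n. G (\<mu> n)) \<le> (\<Sum>n. G n)"
proof -
  have "(\<Sum>n<N. G (\<mu> n)) \<le> (\<Sum>n<\<mu> N. G n)" for N
  proof -
    have "(\<Sum>n<N. G (\<mu> n)) = sum G (\<mu> ` {..<N})"
      using assms by (simp add: sum.reindex strict_mono_imp_inj_on inj_on_subset)
    also have "\<dots> \<le> sum G {..<\<mu> N}"
      using assms by (intro sum_mono2) (auto simp: strict_mono_less)
    finally show ?thesis .
  qed
  then have "(SUP N. \<Sum>n<N. G (\<mu> n)) \<le> (SUP N. \<Sum>n<N. G n)"
    by (meson SUP_least SUP_upper2 UNIV_I)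
  then show ?thesis by (simp add: suminf_eq_SUP)
qed

lemma bracket:
  fixes lam :: "nat \<Rightarrow> real"
  assumes "strict_mono lam" "\<not> bdd_above (range lam)" "lam 0 \<le> v"
  shows "\<exists>m. lam m \<le> v \<and> v < lam (Suc m)"
proof -
  obtain k where k: "v < lam k" using assms(2) by (meson bdd_above.I2 linorder_not_le)
  define k0 where "k0 = (LEAST k. v < lam k)"
  have k0: "v < lam k0" unfolding k0_def by (rule LeastI[of _ k]) (rule k)
  have "k0 \<noteq> 0"
  proof
    assume "k0 = 0" then show False using k0 assms(3) by simp
  qed
  then obtain m where m: "k0 = Suc m" using not0_implies_Suc by blast
  have "\<not> v < lam m" unfolding k0_def using m not_less_Least[of m "\<lambda>k. v < lam k"] k0_def by auto
  then show ?thesis using k0 m not_less by metis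
qed




lemma F_shift_finite:
  fixes lam :: "nat \<Rightarrow> real"
  assumes sm: "strict_mono lam" and unb: "\<not> bdd_above (range lam)"
    and dec: "decseq (\<lambda>n. lam (Suc n) - lam n)"
    and lim: "(\<lambda>n. lam (Suc n) - lam n) \<longlonglongrightarrow> 0"
    and L: "0 < L" and ay: "a \<le> y"
    and fc: "continuous_on UNIV f" and fnn: "\<And>t. 0 \<le> f t"
    and Fa: "(\<Sum>n. V f (a + lam n) (a + lam n + L)) < \<infinity>"
  shows "(\<Sum>n. V f (y + lam n) (y + lam n + L)) < \<infinity>"
proof -
  define h where "h = y - a"
  have h: "0 \<le> h" using ay h_def by simp
  define g where "g n = lam (Suc n) - lam n" for n
  define G where "G m = V f (a + lam m) (a + lam m + L)" for m
  have "\<forall>n. \<exists>m. lam m \<le> lam n + h \<and> lam n + h < lam (Suc m)"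
  proof
    fix n
    have "lam 0 \<le> lam n + h" using sm h by (simp add: strict_mono_less_eq add_increasing2)
    then show "\<exists>m. lam m \<le> lam n + h \<and> lam n + h < lam (Suc m)"
      by (rule bracket[OF sm unb])
  qed
  then obtain \<mu> where \<mu>: "\<And>n. lam (\<mu> n) \<le> lam n + h" "\<And>n. lam n + h < lam (Suc (\<mu> n))"
    by metis
  have ge: "n \<le> \<mu> n" for n
  proof -
    have "lam n < lam (Suc (\<mu> n))" using \<mu>(2)[of n] h by simp
    then have "n < Suc (\<mu> n)" using sm strict_mono_less by blast
    then show ?thesis by simp
  qed
  have smu: "strict_mono \<mu>"
  proof (rule strict_monoI_Suc)
    fix n
    have "g (\<mu> n) \<le> g n" using dec ge unfolding g_def decseq_def by blast
    then have "lam (Suc (\<mu> n)) \<le> lam (Suc n) + h" using \<mu>(1)[of n] unfolding g_def by simp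
    also have "\<dots> < lam (Suc (\<mu> (Suc n)))" using \<mu>(2)[of "Suc n"] .
    finally have "Suc (\<mu> n) < Suc (\<mu> (Suc n))" using sm strict_mono_less by blast
    then show "\<mu> n < \<mu> (Suc n)" by simp
  qed
  have smu2: "strict_mono (\<lambda>n. Suc (\<mu> n))" using smu by (simp add: strict_mono_def)
  have "eventually (\<lambda>n. g n < L) sequentially"
    using order_tendstoD(2)[OF lim L] unfolding g_def by simp
  then obtain N where N: "\<And>n. n \<ge> N \<Longrightarrow> g n \<le> L"
    unfolding eventually_sequentially by (meson less_imp_le)
  define H where "H n = (if n < N then V f (y + lam n) (y + lam n + L) else 0)" for n
  have pt: "V f (y + lam n) (y + lam n + L) \<le> H n + (G (\<mu> n) + G (Suc (\<mu> n)))" for n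
  proof (cases "n < N")
    case True then show ?thesis by (simp add: H_def)
  next
    case False
    define \<alpha> where "\<alpha> = a + lam (\<mu> n)"
    define \<beta> where "\<beta> = a + lam (Suc (\<mu> n))"
    have ab: "\<alpha> \<le> \<beta>" unfolding \<alpha>_def \<beta>_def using sm by (simp add: strict_mono_less_eq)
    have "g (\<mu> n) \<le> L" using N ge False by (meson le_trans not_less)
    then have ba: "\<beta> \<le> \<alpha> + L" unfolding \<alpha>_def \<beta>_def g_def by simp
    have sub: "{y + lam n..y + lam n + L} \<subseteq> {\<alpha>..\<beta> + L}"
      using \<mu>(1)[of n] \<mu>(2)[of n] unfolding \<alpha>_def \<beta>_def h_def by auto
    have "V f (y + lam n) (y + lam n + L) \<le> V f \<alpha> (\<beta> + L)"
      by (rule V_mono[OF sub fnn])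
    also have "\<dots> \<le> V f \<alpha> (\<alpha> + L) + V f \<beta> (\<beta> + L)"
      by (rule V_split[OF ab ba fnn fc])
    also have "\<dots> = G (\<mu> n) + G (Suc (\<mu> n))"
      unfolding G_def \<alpha>_def \<beta>_def by (simp add: add.assoc)
    finally show ?thesis using False by (simp add: H_def)
  qed
  have "(\<Sum>n. V f (y + lam n) (y + lam n + L)) \<le> (\<Sum>n. H n + (G (\<mu> n) + G (Suc (\<mu> n))))"
    by (intro suminf_le pt) auto
  also have "\<dots> = (\<Sum>n. H n) + ((\<Sum>n. G (\<mu> n)) + (\<Sum>n. G (Suc (\<mu> n))))"
    by (simp add: suminf_add)
  also have "\<dots> < \<infinity>"
  proof -
    have "(\<Sum>n. H n) = (\<Sum>n<N. H n)"
      by (rule suminf_finite) (auto simp: H_def)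
    also have "\<dots> < \<infinity>"
      using V_finite[OF fc] by (simp add: H_def ennreal_sum_less_top)
    finally have 1: "(\<Sum>n. H n) < \<infinity>" .
    have 2: "(\<Sum>n. G (\<mu> n)) < \<infinity>"
      using suminf_strict_mono_le[OF smu, of G] Fa unfolding G_def by (meson order.strict_trans1)
    have 3: "(\<Sum>n. G (Suc (\<mu> n))) < \<infinity>"
      using suminf_strict_mono_le[OF smu2, of G] Fa unfolding G_def by (meson order.strict_trans1)
    show ?thesis using 1 2 3 by (simp add: ennreal_add_less_top)
  qed
  finally show ?thesis .
qed



theorem theorem3p4:
  fixes \<Lambda> :: "real set" and f :: "real \<Rightarrow> real" and x :: real
  assumes "dgad_set \<Lambda>"
    and "continuous_on UNIV f"
    and "\<And>t. 0 \<le> f t"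
    and "x \<in> interior (Cset f \<Lambda>)"
  shows "{x..} \<inter> Dset f \<Lambda> \<in> null_sets lebesgue"
proof -
  note fc = assms(2) and fnn = assms(3)
  obtain lam :: "nat \<Rightarrow> real" where sm: "strict_mono lam" and Lam: "\<Lambda> = range lam"
    and unb: "\<not> bdd_above \<Lambda>"
    and dec: "decseq (\<lambda>n. lam (Suc n) - lam n)"
    and lim: "(\<lambda>n. lam (Suc n) - lam n) \<longlonglongrightarrow> 0"
    using assms(1) unfolding dgad_set_def by metis
  define S where "S t = (\<Sum>n. ennreal (f (t + lam n)))" for t
  have ssum: "ssum f \<Lambda> t = S t" for t unfolding S_def by (rule ssum_eq[OF sm Lam])
  have C: "Cset f \<Lambda> = {t. S t < \<infinity>}" unfolding Cset_def ssum ..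
  have D: "Dset f \<Lambda> = {t. S t = \<infinity>}" unfolding Dset_def ssum ..
  have [measurable]: "f \<in> borel_measurable borel" using f_meas[OF fc] .
  have Smeas[measurable]: "S \<in> borel_measurable borel" unfolding S_def by measurable
  obtain \<delta> where \<delta>: "\<delta> > 0" "ball x \<delta> \<subseteq> {t. S t < \<infinity>}"
    using assms(4) unfolding C by (meson mem_interior)
  define F where "F K = {t. S t \<le> ennreal (real K)}" for K :: nat
  have clF: "closed (F K)" for K
    unfolding F_def S_def by (rule closed_le[OF fc fnn]) simp
  have sub1: "{x..x + \<delta>/2} \<subseteq> {t. S t < \<infinity>}"
  proof
    fix t assume "t \<in> {x..x + \<delta>/2}"
    then have "t \<in> ball x \<delta>" using \<delta>(1) by (auto simp: dist_real_def)
    then show "t \<in> {t. S t < \<infinity>}" using \<delta>(2) by blast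
  qed
  have cov: "{x..x + \<delta>/2} \<subseteq> (\<Union>K. F K)"
  proof
    fix t assume "t \<in> {x..x + \<delta>/2}"
    then have "S t < \<infinity>" using sub1 by auto
    then obtain K :: nat where "S t < of_nat K" using ennreal_Ex_less_of_nat[of "S t"] by auto
    then have "t \<in> F K" unfolding F_def by (simp add: ennreal_of_nat_eq_real_of_nat)
    then show "t \<in> (\<Union>K. F K)" by blast
  qed
  obtain K a b where ab: "a < b" "{a..b} \<subseteq> F K" "{a..b} \<subseteq> {x..x + \<delta>/2}"
    using baire_interval[OF clF cov] \<delta> by auto
  define L where "L = b - a"
  have L: "0 < L" using ab L_def by simp
  have Fa: "(\<Sum>n. V f (a + lam n) (a + lam n + L)) < \<infinity>"
  proof -
    have "(\<Sum>n. V f (a + lam n) (a + lam n + L)) = (\<integral>\<^sup>+t. indicator {a..a+L} t * S t \<partial>lborel)"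
      unfolding S_def by (rule F_eq[OF fc, symmetric])
    also have "\<dots> \<le> (\<integral>\<^sup>+t. ennreal (real K) * indicator {a..b} t \<partial>lborel)"
      using ab(2) unfolding L_def F_def by (intro nn_integral_mono) (auto simp: indicator_def)
    also have "\<dots> = ennreal (real K) * emeasure lborel {a..b}"
      by (simp add: nn_integral_cmult_indicator)
    also have "\<dots> < \<infinity>" using ab by (simp add: ennreal_mult_less_top)
    finally show ?thesis .
  qed
  define Z where "Z y = {t \<in> {y..y+L}. S t = \<infinity>}" for y
  have Znull: "Z y \<in> null_sets lborel" if "a \<le> y" for y
  proof -
    have "(\<integral>\<^sup>+t. indicator {y..y+L} t * S t \<partial>lborel) < \<infinity>"
      unfolding S_def F_eq[OF fc]
      by (rule F_shift_finite[OF sm _ dec lim L that fc fnn Fa]) (use unb Lam in simp)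
    then have "AE t in lborel. indicator {y..y+L} t * S t \<noteq> \<infinity>"
      by (intro nn_integral_PInf_AE) auto
    then have "{t \<in> space lborel. \<not> (indicator {y..y+L} t * S t \<noteq> \<infinity>)} \<in> null_sets lborel"
      by (subst (asm) AE_iff_null) auto
    moreover have "{t \<in> space lborel. \<not> (indicator {y..y+L} t * S t \<noteq> \<infinity>)} = Z y"
      unfolding Z_def by (auto simp: indicator_def)
    ultimately show ?thesis by simp
  qed
  have "{x..} \<inter> Dset f \<Lambda> \<subseteq> (\<Union>k::nat. Z (a + real k * L))"
  proof
    fix t assume t: "t \<in> {x..} \<inter> Dset f \<Lambda>"
    then have St: "S t = \<infinity>" and tx: "x \<le> t" unfolding D by auto
    have ta: "a \<le> t"
    proof (rule ccontr)
      assume "\<not> a \<le> t"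
      then have "t \<in> {x..x + \<delta>/2}" using tx ab by auto
      then show False using sub1 St by auto
    qed
    define k where "k = nat \<lfloor>(t - a) / L\<rfloor>"
    have k: "real k = of_int \<lfloor>(t - a) / L\<rfloor>" unfolding k_def using ta L by simp
    have "real k \<le> (t - a) / L" "(t - a) / L < real k + 1"
      unfolding k by linarith+
    then have "real k * L \<le> t - a" "t - a < real k * L + L"
      using L by (simp_all add: field_simps)
    then have "t \<in> Z (a + real k * L)" unfolding Z_def using St by auto
    then show "t \<in> (\<Union>k::nat. Z (a + real k * L))" by blast
  qed
  moreover have "(\<Union>k::nat. Z (a + real k * L)) \<in> null_sets lborel"
    using L by (intro null_sets_UN Znull) simp
  ultimately show ?thesis
    by (meson null_sets_completionI null_sets_completion_subset)
qed

end
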